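(* For integers $a,b,c,d$ with $1\le c<a$, $0\le d<b$, and $a+b+c+d=n$, let $\lambda_{a,b,c,d} = a\,(c+1)\,2^d\,1^{b-d-1}\in P(n)$ (the partition with parts $a$, $c+1$, then $d$ parts equal to $2$, then $b-d-1$ parts equal to $1$). Then the number of standard Young tableaux of shape $\lambda_{a,b,c,d}$ is $$\chi^{\lambda_{a,b,c,d}}(1^n) = \binom{n}{a,b,c,d}\frac{ac(a-c)(b-d)}{(a+b)(a+d)(b+c)(c+d)},$$ and $$\rho_{\lambda_{a,b,c,d}} = \binom{a}{2}-\binom{b+1}{2}+\binom{c}{2}-\binom{d+1}{2},$$ where $2\rho_\lambda=\sum_i\lambda_i(\lambda_i-2i+1)$.
   Context: $\binom{n}{a,b,c,d} = \frac{n!}{a!\,b!\,c!\,d!}$ is the multinomial coefficient. *)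

theory Defs
  imports Main "HOL.Real"
begin

text \<open>Partitions are represented as weakly decreasing lists of positive naturals,
  parts listed as lambda_1 >= lambda_2 >= ... (list index i corresponds to row i+1).\<close>

definition young_diagram :: "nat list \<Rightarrow> (nat \<times> nat) set" where
  "young_diagram lam = {(i, j). i < length lam \<and> j < lam ! i}"

text \<open>Standard Young tableaux of shape lam: bijective fillings of the cells with
  1..|lam|, strictly increasing along rows and down columns (zero outside the diagram,
  so that each tableau is a unique function).\<close>

definition syt :: "nat list \<Rightarrow> ((nat \<times> nat) \<Rightarrow> nat) set" where
  "syt lam = {T. bij_betw T (young_diagram lam) {1..sum_list lam}
      \<and> (\<forall>x. x \<notin> young_diagram lam \<longrightarrow> T x = 0)
      \<and> (\<forall>i j. (i, Suc j) \<in> young_diagram lam \<longrightarrow> T (i, j) < T (i, Suc j))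
      \<and> (\<forall>i j. (Suc i, j) \<in> young_diagram lam \<longrightarrow> T (i, j) < T (Suc i, j))}"

definition num_syt :: "nat list \<Rightarrow> nat" where
  "num_syt lam = card (syt lam)"

definition rho :: "nat list \<Rightarrow> real" where
  "rho lam = (\<Sum>i<length lam. real (lam ! i) * (real (lam ! i) - 2 * real (i + 1) + 1)) / 2"

definition lam_abcd :: "nat \<Rightarrow> nat \<Rightarrow> nat \<Rightarrow> nat \<Rightarrow> nat list" where
  "lam_abcd a b c d = [a, c + 1] @ replicate d 2 @ replicate (b - d - 1) 1"

end

theory Submission
  imports Defs Complex_Main
begin


definition dec :: "nat list \<Rightarrow> nat \<Rightarrow> nat list" where
  "dec lam i = lam[i := lam ! i - 1]"

definition corner :: "nat list \<Rightarrow> nat \<Rightarrow> bool" where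
  "corner lam i \<longleftrightarrow> i < length lam \<and> 0 < lam ! i \<and> (Suc i < length lam \<longrightarrow> lam ! Suc i < lam ! i)"

lemma yd_dec: "i < length lam \<Longrightarrow> 0 < lam ! i \<Longrightarrow>
   young_diagram (dec lam i) = young_diagram lam - {(i, lam ! i - 1)}"
  by (auto simp: young_diagram_def dec_def nth_list_update split: if_splits)

lemma sum_dec: "i < length lam \<Longrightarrow> 0 < lam ! i \<Longrightarrow> sum_list (dec lam i) = sum_list lam - 1"
  unfolding dec_def using sum_list_update[of i lam "lam ! i - 1"] elem_le_sum_list[of i lam]
  by simp

lemma yd_Sigma: "young_diagram lam = Sigma {..<length lam} (\<lambda>i. {..<lam ! i})"
  by (auto simp: young_diagram_def)

lemma finite_yd: "finite (young_diagram lam)"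
  unfolding yd_Sigma by auto

lemma finite_syt: "finite (syt lam)"
proof -
  have "syt lam \<subseteq> {f. \<forall>x. (x \<in> young_diagram lam \<longrightarrow> f x \<in> {1..sum_list lam}) \<and>
          (x \<notin> young_diagram lam \<longrightarrow> f x = 0)}"
    by (auto simp: syt_def bij_betw_def)
  moreover have "finite \<dots>" by (rule finite_set_of_finite_funs) (auto simp: finite_yd)
  ultimately show ?thesis by (rule finite_subset)
qed

lemma syt_le: assumes "T \<in> syt lam" shows "T x \<le> sum_list lam"
proof -
  have b: "T ` young_diagram lam = {1..sum_list lam}" and o: "\<And>x. x \<notin> young_diagram lam \<Longrightarrow> T x = 0"
    using assms unfolding syt_def bij_betw_def by auto
  show ?thesis
  proof (cases "x \<in> young_diagram lam")
    case True
    then have "T x \<in> {1..sum_list lam}" using b by blast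
    then show ?thesis by simp
  qed (simp add: o)
qed

lemma syt_decomp:
  assumes n0: "0 < sum_list lam"
  shows "syt lam = (\<Union>i\<in>{i. corner lam i}.
           (\<lambda>T. T((i, lam ! i - 1) := sum_list lam)) ` syt (dec lam i))"
proof (intro equalityI subsetI)
  let ?n = "sum_list lam"
  let ?D = "young_diagram lam"
  fix T assume T: "T \<in> syt lam"
  have bij: "bij_betw T ?D {1..?n}" and out: "\<And>x. x \<notin> ?D \<Longrightarrow> T x = 0"
    and row: "\<And>i j. (i, Suc j) \<in> ?D \<Longrightarrow> T (i, j) < T (i, Suc j)"
    and col: "\<And>i j. (Suc i, j) \<in> ?D \<Longrightarrow> T (i, j) < T (Suc i, j)"
    using T unfolding syt_def by auto
  have Tle: "\<And>x. T x \<le> ?n" using syt_le[OF T] .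
  have "?n \<in> T ` ?D" using bij n0 by (auto simp: bij_betw_def)
  then obtain i j where ij: "(i, j) \<in> ?D" "T (i, j) = ?n" by auto
  have il: "i < length lam" "j < lam ! i" using ij(1) by (auto simp: young_diagram_def)
  have j: "j = lam ! i - 1"
  proof (rule ccontr)
    assume "j \<noteq> lam ! i - 1"
    then have "(i, Suc j) \<in> ?D" using il by (auto simp: young_diagram_def)
    from row[OF this] ij(2) Tle[of "(i, Suc j)"] show False by simp
  qed
  have cor: "corner lam i"
  proof -
    have "lam ! Suc i < lam ! i" if "Suc i < length lam"
    proof (rule ccontr)
      assume "\<not> lam ! Suc i < lam ! i"
      then have "(Suc i, j) \<in> ?D" using il that by (auto simp: young_diagram_def)
      from col[OF this] ij(2) Tle[of "(Suc i, j)"] show False by simp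
    qed
    then show ?thesis using il by (auto simp: corner_def)
  qed
  define T' where "T' = T((i, j) := 0)"
  have D': "young_diagram (dec lam i) = ?D - {(i, j)}" using yd_dec[of i lam] il j by simp
  have s': "sum_list (dec lam i) = ?n - 1" using sum_dec[of i lam] il by simp
  have "T' \<in> syt (dec lam i)"
    unfolding syt_def mem_Collect_eq
  proof (intro conjI allI impI)
    have "bij_betw T (?D - {(i,j)}) ({1..?n} - {?n})"
      using bij_betw_DiffI[OF bij, of "{(i,j)}" "{?n}"] ij n0 by auto
    moreover have "{1..?n} - {?n} = {1..?n - 1}" by auto
    ultimately have "bij_betw T (?D - {(i,j)}) {1..?n - 1}" by simp
    then show "bij_betw T' (young_diagram (dec lam i)) {1..sum_list (dec lam i)}"
      unfolding D' s' by (rule bij_betw_cong[THEN iffD1, rotated]) (auto simp: T'_def)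
  next
    fix x assume "x \<notin> young_diagram (dec lam i)"
    then show "T' x = 0" unfolding D' T'_def using out[of x] by auto
  next
    fix i0 j0 assume "(i0, Suc j0) \<in> young_diagram (dec lam i)"
    then have "(i0, Suc j0) \<in> ?D" "(i0, Suc j0) \<noteq> (i, j)" unfolding D' by auto
    then show "T' (i0, j0) < T' (i0, Suc j0)" using row[of i0 j0] unfolding T'_def
      by (auto simp: fun_upd_def)
  next
    fix i0 j0 assume "(Suc i0, j0) \<in> young_diagram (dec lam i)"
    then have "(Suc i0, j0) \<in> ?D" "(Suc i0, j0) \<noteq> (i, j)" unfolding D' by auto
    then show "T' (i0, j0) < T' (Suc i0, j0)" using col[of i0 j0] unfolding T'_def
      by (auto simp: fun_upd_def)
  qed
  moreover have "T = T'((i, lam ! i - 1) := ?n)" using ij(2) j by (auto simp: T'_def)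
  ultimately show "T \<in> (\<Union>i\<in>{i. corner lam i}.
           (\<lambda>T. T((i, lam ! i - 1) := sum_list lam)) ` syt (dec lam i))"
    using cor by blast
next
  let ?n = "sum_list lam"
  let ?D = "young_diagram lam"
  fix T assume "T \<in> (\<Union>i\<in>{i. corner lam i}.
           (\<lambda>T. T((i, lam ! i - 1) := sum_list lam)) ` syt (dec lam i))"
  then obtain i T' where cor: "corner lam i" and T': "T' \<in> syt (dec lam i)"
    and TT: "T = T'((i, lam ! i - 1) := ?n)" by auto
  let ?x = "(i, lam ! i - 1)"
  have il: "i < length lam" "0 < lam ! i" using cor by (auto simp: corner_def)
  have D': "young_diagram (dec lam i) = ?D - {?x}" using yd_dec[of i lam] il by simp
  have s': "sum_list (dec lam i) = ?n - 1" using sum_dec[of i lam] il by simp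
  have xD: "?x \<in> ?D" using il by (auto simp: young_diagram_def)
  have bij': "bij_betw T' (?D - {?x}) {1..?n - 1}" and out': "\<And>y. y \<notin> ?D - {?x} \<Longrightarrow> T' y = 0"
    and row': "\<And>i j. (i, Suc j) \<in> ?D - {?x} \<Longrightarrow> T' (i, j) < T' (i, Suc j)"
    and col': "\<And>i j. (Suc i, j) \<in> ?D - {?x} \<Longrightarrow> T' (i, j) < T' (Suc i, j)"
    using T' unfolding syt_def D' s' by auto
  have T'le: "\<And>y. T' y \<le> ?n - 1" using syt_le[OF T'] s' by simp
  show "T \<in> syt lam"
    unfolding syt_def mem_Collect_eq
  proof (intro conjI allI impI)
    have "bij_betw T (?D - {?x}) {1..?n - 1}"
      using bij' by (rule bij_betw_cong[THEN iffD1, rotated]) (auto simp: TT)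
    then have "bij_betw T ((?D - {?x}) \<union> {?x}) ({1..?n - 1} \<union> {T ?x})"
      by (rule notIn_Un_bij_betw[rotated 2]) (auto simp: TT)
    moreover have "(?D - {?x}) \<union> {?x} = ?D" using xD by auto
    moreover have "{1..?n - 1} \<union> {T ?x} = {1..?n}" using n0 by (auto simp: TT)
    ultimately show "bij_betw T ?D {1..?n}" by simp
  next
    fix y assume "y \<notin> ?D"
    then show "T y = 0" using out' xD by (auto simp: TT)
  next
    fix i0 j0 assume h: "(i0, Suc j0) \<in> ?D"
    show "T (i0, j0) < T (i0, Suc j0)"
    proof (cases "(i0, Suc j0) = ?x")
      case True
      have "(i0, j0) \<noteq> ?x" using True by auto
      then show ?thesis using True T'le[of "(i0,j0)"] n0 by (auto simp: TT)
    next
      case False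
      have "(i0, j0) \<noteq> ?x"
      proof
        assume "(i0, j0) = ?x"
        then show False using h il by (auto simp: young_diagram_def)
      qed
      then show ?thesis using False h row'[of i0 j0] by (auto simp: TT)
    qed
  next
    fix i0 j0 assume h: "(Suc i0, j0) \<in> ?D"
    show "T (i0, j0) < T (Suc i0, j0)"
    proof (cases "(Suc i0, j0) = ?x")
      case True
      have "(i0, j0) \<noteq> ?x" using True by auto
      then show ?thesis using True T'le[of "(i0,j0)"] n0 by (auto simp: TT)
    next
      case False
      have "(i0, j0) \<noteq> ?x"
      proof
        assume "(i0, j0) = ?x"
        then show False using h il cor by (auto simp: young_diagram_def corner_def)
      qed
      then show ?thesis using False h col'[of i0 j0] by (auto simp: TT)
    qed
  qed
qed

lemma num_syt_branch:
  assumes n0: "0 < sum_list lam"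
  shows "num_syt lam = (\<Sum>i\<in>{i. corner lam i}. num_syt (dec lam i))"
proof -
  let ?f = "\<lambda>i T. T((i, lam ! i - 1) := sum_list lam)"
  have fin: "finite {i. corner lam i}"
    by (rule finite_subset[of _ "{..<length lam}"]) (auto simp: corner_def)
  have zero: "T' (i, lam ! i - 1) = 0" if "corner lam i" "T' \<in> syt (dec lam i)" for i T'
  proof -
    have "(i, lam ! i - 1) \<notin> young_diagram (dec lam i)"
      using that(1) by (auto simp: yd_dec corner_def)
    then show ?thesis using that(2) by (auto simp: syt_def)
  qed
  have inj: "inj_on (?f i) (syt (dec lam i))" if "corner lam i" for i
  proof (rule inj_onI)
    fix T1 T2 assume "T1 \<in> syt (dec lam i)" "T2 \<in> syt (dec lam i)" "?f i T1 = ?f i T2"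
    then show "T1 = T2" using zero[OF that] by (metis fun_upd_idem fun_upd_upd)
  qed
  have disj: "?f i ` syt (dec lam i) \<inter> ?f k ` syt (dec lam k) = {}"
    if "corner lam i" "corner lam k" "i \<noteq> k" for i k
  proof (rule ccontr)
    assume "?f i ` syt (dec lam i) \<inter> ?f k ` syt (dec lam k) \<noteq> {}"
    then obtain T1 T2 where T1: "T1 \<in> syt (dec lam i)" and T2: "T2 \<in> syt (dec lam k)"
      and eq: "?f i T1 = ?f k T2" by blast
    have "(k, lam ! k - 1) \<in> young_diagram lam"
      using that by (auto simp: corner_def young_diagram_def)
    then have "(k, lam ! k - 1) \<in> young_diagram (dec lam i)"
      using that by (subst yd_dec) (auto simp: corner_def)
    have "T1 (k, lam ! k - 1) \<le> sum_list (dec lam i)"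
      by (rule syt_le[OF T1])
    then have "T1 (k, lam ! k - 1) < sum_list lam"
      using sum_dec[of i lam] that n0 by (auto simp: corner_def)
    moreover have "?f i T1 (k, lam ! k - 1) = sum_list lam" using eq by simp
    ultimately show False using that(3) by simp
  qed
  have "num_syt lam = card (\<Union>i\<in>{i. corner lam i}. ?f i ` syt (dec lam i))"
    unfolding num_syt_def using syt_decomp[OF n0] by simp
  also have "\<dots> = (\<Sum>i\<in>{i. corner lam i}. card (?f i ` syt (dec lam i)))"
    apply (rule card_UN_disjoint[OF fin])
     apply (simp add: finite_syt)
    using disj by blast
  also have "\<dots> = (\<Sum>i\<in>{i. corner lam i}. num_syt (dec lam i))"
    by (rule sum.cong) (use inj in \<open>auto simp: num_syt_def intro: card_image\<close>)
  finally show ?thesis .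
qed



lemma syt_cong: "young_diagram l1 = young_diagram l2 \<Longrightarrow> sum_list l1 = sum_list l2 \<Longrightarrow> syt l1 = syt l2"
  unfolding syt_def by simp

lemma num_syt_snoc0: "num_syt (xs @ [0]) = num_syt xs"
proof -
  have "young_diagram (xs @ [0]) = young_diagram xs"
    by (auto simp: young_diagram_def nth_append split: if_splits)
  then show ?thesis unfolding num_syt_def by (subst syt_cong[of _ xs]) auto
qed

lemma num_syt_Nil: "num_syt [] = 1"
proof -
  have "syt [] = {\<lambda>_. 0}"
    by (auto simp: syt_def young_diagram_def bij_betw_def)
  then show ?thesis by (simp add: num_syt_def)
qed

lemma num_syt_0: "num_syt [0] = 1"
  using num_syt_snoc0[of "[]"] num_syt_Nil by simp

lemma sum_Un4:
  assumes "finite A" "finite B" "finite E" "finite F"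
    "A \<inter> B = {}" "A \<inter> E = {}" "A \<inter> F = {}" "B \<inter> E = {}" "B \<inter> F = {}" "E \<inter> F = {}"
  shows "sum g (A \<union> B \<union> E \<union> F) = sum g A + sum g B + sum g E + sum g F"
  using assms by (simp add: sum.union_disjoint Int_Un_distrib Int_Un_distrib2)

lemma dec_snoc: "dec (xs @ [x]) (length xs) = xs @ [x - 1]"
  by (simp add: dec_def)

lemma dec_mid: "dec (xs @ x # ys) (length xs) = xs @ (x - 1) # ys"
  by (simp add: dec_def)

lemma corners_hook: "1 \<le> a \<Longrightarrow> {i. corner (a # replicate b 1) i} =
   (if 1 < a \<or> b = 0 then {0} else {}) \<union> (if 0 < b then {b} else {})"
  by (auto simp: corner_def nth_Cons' split: if_splits)

lemma hook_count: "1 \<le> a \<Longrightarrow> num_syt (a # replicate b 1) = (a - 1 + b) choose b"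
proof (induction "a + b" arbitrary: a b rule: less_induct)
  case less
  have br: "num_syt (a # replicate b 1) =
     (\<Sum>i\<in>(if 1 < a \<or> b = 0 then {0} else {}) \<union> (if 0 < b then {b} else {}).
        num_syt (dec (a # replicate b 1) i))"
    using num_syt_branch[of "a # replicate b 1"] less.prems corners_hook[OF less.prems] by simp
  show ?case
  proof (cases b)
    case 0
    have "num_syt (a # replicate b 1) = num_syt [a - 1]"
      using br 0 by (simp add: dec_def)
    also have "\<dots> = 1"
    proof (cases "a = 1")
      case True then show ?thesis by (simp add: num_syt_0)
    next
      case False
      then show ?thesis using less.hyps[of "a - 1" 0] less.prems by simp
    qed
    finally show ?thesis using 0 by simp
  next
    case (Suc b')
    have last: "num_syt (dec (a # replicate b 1) b) = num_syt (a # replicate b' 1)"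
    proof -
      have "a # replicate b 1 = (a # replicate b' 1) @ [1]" using Suc by (simp add: replicate_append_same)
      moreover have "length (a # replicate b' 1) = b" using Suc by simp
      ultimately have "dec (a # replicate b 1) b = (a # replicate b' 1) @ [0]"
        using dec_snoc[of "a # replicate b' 1" 1] by simp
      then show ?thesis using num_syt_snoc0[of "a # replicate b' 1"] by simp
    qed
    have IH2: "num_syt (a # replicate b' 1) = (a - 1 + b') choose b'"
      using less.hyps[of a b'] less.prems Suc by simp
    show ?thesis
    proof (cases "a = 1")
      case True
      then have "num_syt (a # replicate b 1) = num_syt (dec (a # replicate b 1) b)"
        using br Suc by simp
      then show ?thesis using last IH2 True Suc by simp
    next
      case False
      then have "num_syt (a # replicate b 1) = num_syt (dec (a # replicate b 1) 0) + num_syt (dec (a # replicate b 1) b)"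
        using br Suc less.prems by simp
      also have "num_syt (dec (a # replicate b 1) 0) = num_syt ((a - 1) # replicate b 1)"
        by (simp add: dec_def)
      also have "\<dots> = (a - 2 + b) choose b"
        using less.hyps[of "a - 1" b] less.prems False by (simp add: numeral_2_eq_2)
      finally have "num_syt (a # replicate b 1) = ((a - 2 + b) choose b) + ((a - 1 + b') choose b')"
        using last IH2 by (simp only:)
      moreover have "a - 1 + b = Suc (a - 2 + b)" "a - 1 + b' = a - 2 + b" using False less.prems Suc by auto
      ultimately show ?thesis using Suc binomial_Suc_Suc[of "a - 2 + b" b'] by simp
    qed
  qed
qed

lemma len_S: "d < b \<Longrightarrow> length (lam_abcd a b c d) = b + 1"
  by (simp add: lam_abcd_def)

lemma nth_S: "d < b \<Longrightarrow> i < b + 1 \<Longrightarrow> lam_abcd a b c d ! i =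
   (if i = 0 then a else if i = 1 then c + 1 else if i < d + 2 then 2 else 1)"
  by (cases i; cases "i - 1") (auto simp: lam_abcd_def nth_append)

lemma corners_S:
  assumes "1 \<le> c" "c < a" "d < b"
  shows "{i. corner (lam_abcd a b c d) i} = (if c + 1 < a then {0} else {}) \<union> (if d = 0 \<or> 2 \<le> c then {1} else {})
     \<union> (if 0 < d then {d + 1} else {}) \<union> (if d + 1 < b then {b} else {})"
  using assms unfolding corner_def len_S[OF assms(3)]
  by (auto simp: nth_S split: if_splits)



lemma sum_if_single: "sum g (if P then {k} else {}) = (if P then g k else 0)"
  by simp

lemma step_S:
  assumes "1 \<le> c" "c < a" "d < b"
  shows "num_syt (lam_abcd a b c d) =
    (if c + 1 < a then num_syt (lam_abcd (a - 1) b c d) else 0) +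
    (if d = 0 \<or> 2 \<le> c then num_syt (lam_abcd a b (c - 1) d) else 0) +
    (if 0 < d then num_syt (lam_abcd a b c (d - 1)) else 0) +
    (if d + 1 < b then num_syt (lam_abcd a (b - 1) c d) else 0)"
proof -
  let ?L = "lam_abcd a b c d"
  have pos: "0 < sum_list ?L" using assms by (simp add: lam_abcd_def)
  have "num_syt ?L = (\<Sum>i\<in>(if c + 1 < a then {0} else {}) \<union> (if d = 0 \<or> 2 \<le> c then {1} else {})
     \<union> (if 0 < d then {d + 1} else {}) \<union> (if d + 1 < b then {b} else {}). num_syt (dec ?L i))"
    using num_syt_branch[OF pos] corners_S[OF assms] by simp
  also have "\<dots> = (if c + 1 < a then num_syt (dec ?L 0) else 0) +
    (if d = 0 \<or> 2 \<le> c then num_syt (dec ?L 1) else 0) +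
    (if 0 < d then num_syt (dec ?L (d + 1)) else 0) +
    (if d + 1 < b then num_syt (dec ?L b) else 0)"
    by (subst sum_Un4) (auto simp only: sum_if_single split: if_splits)
  also have "dec ?L 0 = lam_abcd (a - 1) b c d" by (simp add: dec_def lam_abcd_def)
  also have "dec ?L 1 = lam_abcd a b (c - 1) d" using assms by (simp add: dec_def lam_abcd_def)
  also have "(if 0 < d then num_syt (dec ?L (d + 1)) else 0) =
      (if 0 < d then num_syt (lam_abcd a b c (d - 1)) else 0)"
  proof (cases d)
    case (Suc d')
    have "?L = (a # (c + 1) # replicate d' 2) @ 2 # replicate (b - d - 1) 1"
      using Suc by (simp add: lam_abcd_def replicate_append_same[symmetric])
    moreover have "length (a # (c + 1) # replicate d' 2) = d + 1" using Suc by simp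
    ultimately have "dec ?L (d + 1) = (a # (c + 1) # replicate d' 2) @ 1 # replicate (b - d - 1) 1"
      using dec_mid[of "a # (c + 1) # replicate d' 2" 2 "replicate (b - d - 1) 1"] by simp
    also have "\<dots> = lam_abcd a b c d'"
    proof -
      have e: "replicate (b - d' - 1) (1::nat) = 1 # replicate (b - d - 1) 1"
      proof -
        have "b - d' - 1 = Suc (b - d - 1)" using Suc assms by simp
        then show ?thesis by (simp only: replicate_Suc)
      qed
      show ?thesis unfolding lam_abcd_def e using Suc by simp
    qed
    finally show ?thesis using Suc by simp
  qed simp
  also have "(if d + 1 < b then num_syt (dec ?L b) else 0) =
      (if d + 1 < b then num_syt (lam_abcd a (b - 1) c d) else 0)"
  proof (cases "d + 1 < b")
    case True
    define e' where "e' = b - d - 2"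
    have e: "b - d - 1 = Suc e'" using True by (simp add: e'_def)
    have "?L = (a # (c + 1) # replicate d 2 @ replicate e' 1) @ [1]"
      using e by (simp add: lam_abcd_def replicate_append_same[symmetric])
    moreover have "length (a # (c + 1) # replicate d 2 @ replicate e' 1) = b" using e by simp
    ultimately have "dec ?L b = (a # (c + 1) # replicate d 2 @ replicate e' 1) @ [0]"
      using dec_snoc[of "a # (c + 1) # replicate d 2 @ replicate e' 1" 1] by simp
    then have "num_syt (dec ?L b) = num_syt (a # (c + 1) # replicate d 2 @ replicate e' 1)"
      using num_syt_snoc0[of "a # (c + 1) # replicate d 2 @ replicate e' 1"] by simp
    also have "a # (c + 1) # replicate d 2 @ replicate e' 1 = lam_abcd a (b - 1) c d"
      using e by (simp add: lam_abcd_def)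
    finally show ?thesis using True by simp
  qed simp
  finally show ?thesis .
qed

lemma hook_S: "1 \<le> a \<Longrightarrow> 1 \<le> b \<Longrightarrow> num_syt (lam_abcd a b 0 0) = (a - 1 + b) choose b"
proof -
  assume "1 \<le> a" "1 \<le> b"
  moreover have "lam_abcd a b 0 0 = a # replicate b 1" using \<open>1 \<le> b\<close>
    by (cases b) (auto simp: lam_abcd_def)
  ultimately show ?thesis using hook_count by simp
qed



definition Rf :: "real \<Rightarrow> real \<Rightarrow> real \<Rightarrow> real \<Rightarrow> real" where
  "Rf x y z w = x*z*(x-z)*(y-w)/((x+y)*(x+w)*(y+z)*(z+w))"

lemma Rid0:
  fixes x y z w A B C E A1 B1 C1 E1 :: real
  assumes nz: "A \<noteq> 0" "B \<noteq> 0" "C \<noteq> 0" "E \<noteq> 0" "A1 \<noteq> 0" "B1 \<noteq> 0" "C1 \<noteq> 0" "E1 \<noteq> 0"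
  and eq: "A = x+y" "B = x+w" "C = y+z" "E = z+w" "A1 = x+y-1" "B1 = x+w-1" "C1 = y+z-1" "E1=z+w-1"
  shows "(x+y+z+w) * (x*z*(x-z)*(y-w)/(A*B*C*E)) =
     x * ((x-1)*z*(x-1-z)*(y-w)/(A1*B1*C*E)) + y * (x*z*(x-z)*(y-1-w)/(A1*B*C1*E))
   + z * (x*(z-1)*(x-(z-1))*(y-w)/(A*B*C1*E1)) + w * (x*z*(x-z)*(y-(w-1))/(A*B1*C*E1))"
proof -
  have "(x+y+z+w) * (x*z*(x-z)*(y-w)) * (A1*B1*C1*E1) =
     x * ((x-1)*z*(x-1-z)*(y-w)) * (A*B*C1*E1) + y * (x*z*(x-z)*(y-1-w))*(A*B1*C*E1)
   + z * (x*(z-1)*(x-(z-1))*(y-w)) * (A1*B1*C*E) + w * (x*z*(x-z)*(y-(w-1))) *(A1*B*C1*E)"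
    unfolding eq by algebra
  moreover
  let ?P = "A*B*C*E*A1*B1*C1*E1"
  have P0: "?P \<noteq> 0" using nz by simp
  have t0: "(x+y+z+w) * (x*z*(x-z)*(y-w)/(A*B*C*E)) * ?P = (x+y+z+w) * (x*z*(x-z)*(y-w)) * (A1*B1*C1*E1)"
    using nz by (simp add: field_simps)
  have t1: "x * ((x-1)*z*(x-1-z)*(y-w)/(A1*B1*C*E)) * ?P = x * ((x-1)*z*(x-1-z)*(y-w)) * (A*B*C1*E1)"
    using nz by (simp add: field_simps)
  have t2: "y * (x*z*(x-z)*(y-1-w)/(A1*B*C1*E)) * ?P = y * (x*z*(x-z)*(y-1-w))*(A*B1*C*E1)"
    using nz by (simp add: field_simps)
  have t3: "z * (x*(z-1)*(x-(z-1))*(y-w)/(A*B*C1*E1)) * ?P = z * (x*(z-1)*(x-(z-1))*(y-w)) * (A1*B1*C*E)"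
    using nz by (simp add: field_simps)
  have t4: "w * (x*z*(x-z)*(y-(w-1))/(A*B1*C*E1)) * ?P = w * (x*z*(x-z)*(y-(w-1))) *(A1*B*C1*E)"
    using nz by (simp add: field_simps)
  ultimately have "(x+y+z+w) * (x*z*(x-z)*(y-w)/(A*B*C*E)) * ?P =
     (x * ((x-1)*z*(x-1-z)*(y-w)/(A1*B1*C*E)) + y * (x*z*(x-z)*(y-1-w)/(A1*B*C1*E))
   + z * (x*(z-1)*(x-(z-1))*(y-w)/(A*B*C1*E1)) + w * (x*z*(x-z)*(y-(w-1))/(A*B1*C*E1))) * ?P"
  proof -
    have "(x * ((x-1)*z*(x-1-z)*(y-w)/(A1*B1*C*E)) + y * (x*z*(x-z)*(y-1-w)/(A1*B*C1*E))
   + z * (x*(z-1)*(x-(z-1))*(y-w)/(A*B*C1*E1)) + w * (x*z*(x-z)*(y-(w-1))/(A*B1*C*E1))) * ?P =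
     x * ((x-1)*z*(x-1-z)*(y-w)) * (A*B*C1*E1) + y * (x*z*(x-z)*(y-1-w))*(A*B1*C*E1)
   + z * (x*(z-1)*(x-(z-1))*(y-w)) * (A1*B1*C*E) + w * (x*z*(x-z)*(y-(w-1))) *(A1*B*C1*E)"
      by (simp only: distrib_right t1 t2 t3 t4)
    then show ?thesis using t0 \<open>(x+y+z+w) * (x*z*(x-z)*(y-w)) * (A1*B1*C1*E1) = _\<close> by simp
  qed
  then show ?thesis using P0 by (simp only: mult_cancel_right) simp
qed

lemma Rid:
  fixes x y z w :: real
  assumes "x+y \<noteq> 0" "x+w \<noteq> 0" "y+z \<noteq> 0" "z+w \<noteq> 0" "x+y-1 \<noteq> 0" "x+w-1 \<noteq> 0" "y+z-1 \<noteq> 0" "z+w-1 \<noteq> 0"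
  shows "(x+y+z+w) * Rf x y z w = x * Rf (x-1) y z w + y * Rf x (y-1) z w + z * Rf x y (z-1) w + w * Rf x y z (w-1)"
proof -
  have 1: "Rf (x-1) y z w = (x-1)*z*(x-1-z)*(y-w)/((x+y-1)*(x+w-1)*(y+z)*(z+w))"
    unfolding Rf_def by (simp add: algebra_simps)
  have 2: "Rf x (y-1) z w = x*z*(x-z)*(y-1-w)/((x+y-1)*(x+w)*(y+z-1)*(z+w))"
    unfolding Rf_def by (simp add: algebra_simps)
  have 3: "Rf x y (z-1) w = x*(z-1)*(x-(z-1))*(y-w)/((x+y)*(x+w)*(y+z-1)*(z+w-1))"
    unfolding Rf_def by (simp add: algebra_simps)
  have 4: "Rf x y z (w-1) = x*z*(x-z)*(y-(w-1))/((x+y)*(x+w-1)*(y+z)*(z+w-1))"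
    unfolding Rf_def by (simp add: algebra_simps)
  show ?thesis unfolding 1 2 3 4 unfolding Rf_def
    by (rule Rid0) (use assms in auto)
qed

lemma d3: "(a+b+c)*(p::real) = a*p + b*p + c*p"
  by (simp add: distrib_right)

lemma fr: "(D::real) \<noteq> 0 \<Longrightarrow> k * (N / D) * (D * Q) = k * N * Q"
  by simp

lemma Hid:
  fixes x y :: real
  assumes "x+y \<noteq> 0" "x \<noteq> 0" "y+1 \<noteq> 0" "x+y-1 \<noteq> 0" "x-1 \<noteq> 0" "y \<noteq> 0"
  shows "(x+y+1) * Rf x y 1 0 = x * Rf (x-1) y 1 0 + y * Rf x (y-1) 1 0 + x/(x+y)"
proof -
  have 0: "Rf x y 1 0 = x*(x-1)*y/((x+y)*x*(y+1))" unfolding Rf_def by simp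
  have 1: "Rf (x-1) y 1 0 = (x-1)*(x-2)*y/((x+y-1)*(x-1)*(y+1))"
    unfolding Rf_def by (simp add: algebra_simps)
  have 2: "Rf x (y-1) 1 0 = x*(x-1)*(y-1)/((x+y-1)*x*y)"
    unfolding Rf_def by (simp add: algebra_simps)
  let ?P = "(x+y)*x*(y+1)*(x+y-1)*(x-1)*y"
  have P0: "?P \<noteq> 0" using assms by simp
  have t0: "(x+y+1) * (x*(x-1)*y/((x+y)*x*(y+1))) * ?P = (x+y+1) * (x*(x-1)*y) * ((x+y-1)*(x-1)*y)"
  proof -
    have "?P = ((x+y)*x*(y+1)) * ((x+y-1)*(x-1)*y)" by algebra
    then show ?thesis using fr[of "(x+y)*x*(y+1)"] assms by simp
  qed
  have t1: "x * ((x-1)*(x-2)*y/((x+y-1)*(x-1)*(y+1))) * ?P = x * ((x-1)*(x-2)*y) * ((x+y)*x*y)"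
  proof -
    have "?P = ((x+y-1)*(x-1)*(y+1)) * ((x+y)*x*y)" by algebra
    then show ?thesis using fr[of "(x+y-1)*(x-1)*(y+1)"] assms by simp
  qed
  have t2: "y * (x*(x-1)*(y-1)/((x+y-1)*x*y)) * ?P = y * (x*(x-1)*(y-1)) * ((x+y)*(y+1)*(x-1))"
  proof -
    have "?P = ((x+y-1)*x*y) * ((x+y)*(y+1)*(x-1))" by algebra
    then show ?thesis using fr[of "(x+y-1)*x*y"] assms by simp
  qed
  have t3: "x/(x+y) * ?P = x * (x*(y+1)*(x+y-1)*(x-1)*y)"
  proof -
    have "?P = (x+y) * (x*(y+1)*(x+y-1)*(x-1)*y)" by algebra
    then show ?thesis using fr[of "x+y" 1 x] assms by simp
  qed
  have poly: "(x+y+1) * (x*(x-1)*y) * ((x+y-1)*(x-1)*y) = x * ((x-1)*(x-2)*y) * ((x+y)*x*y)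
     + y * (x*(x-1)*(y-1)) * ((x+y)*(y+1)*(x-1)) + x * (x*(y+1)*(x+y-1)*(x-1)*y)"
    by algebra
  have "(x * ((x-1)*(x-2)*y/((x+y-1)*(x-1)*(y+1))) + y * (x*(x-1)*(y-1)/((x+y-1)*x*y)) + x/(x+y)) * ?P
     = x * ((x-1)*(x-2)*y) * ((x+y)*x*y) + y * (x*(x-1)*(y-1)) * ((x+y)*(y+1)*(x-1)) + x * (x*(y+1)*(x+y-1)*(x-1)*y)"
    unfolding d3[of _ _ _ "?P"] t1 t2 t3 ..
  then have "(x+y+1) * (x*(x-1)*y/((x+y)*x*(y+1))) * ?P =
     (x * ((x-1)*(x-2)*y/((x+y-1)*(x-1)*(y+1))) + y * (x*(x-1)*(y-1)/((x+y-1)*x*y)) + x/(x+y)) * ?P"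
    using t0 poly by simp
  then show ?thesis unfolding 0 1 2 using P0 by (simp only: mult_cancel_right) simp
qed


definition Mf :: "nat \<Rightarrow> nat \<Rightarrow> nat \<Rightarrow> nat \<Rightarrow> real" where
  "Mf a b c d = fact (a+b+c+d) / (fact a * fact b * fact c * fact d)"

definition Fm :: "nat \<Rightarrow> nat \<Rightarrow> nat \<Rightarrow> nat \<Rightarrow> real" where
  "Fm a b c d = fact (a+b+c+d) / (fact a * fact b * fact c * fact d) *
           (real a * real c * (real a - real c) * (real b - real d)) /
           ((real a + real b) * (real a + real d) * (real b + real c) * (real c + real d))"

lemma Fm_Rf: "Fm a b c d = Mf a b c d * Rf a b c d"
  by (simp add: Fm_def Mf_def Rf_def)

lemma fact_red: "1 \<le> (k::nat) \<Longrightarrow> (fact k :: real) = real k * fact (k - 1)"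
  by (simp add: fact_reduce)

lemma Mf_gen: "1 \<le> a \<Longrightarrow> fact (a - 1 + r) / (fact (a - 1) * q) = fact (a + r) / (fact a * (q::real)) * (real a / real (a + r))"
proof -
  assume a: "1 \<le> a"
  have "a - 1 + r = a + r - 1" using a by simp
  moreover have "(fact (a + r) :: real) = real (a + r) * fact (a + r - 1)" using a by (simp add: fact_red)
  moreover have "(fact a :: real) = real a * fact (a - 1)" using a by (simp add: fact_red)
  moreover have "\<And>F G N A. (G::real) \<noteq> 0 \<Longrightarrow> A \<noteq> 0 \<Longrightarrow> N \<noteq> 0 \<Longrightarrow>
     F / (G * q) = (N * F) / ((A * G) * q) * (A / N)"
    by (cases "q = 0") (simp_all add: field_simps)
  ultimately show ?thesis using a by (simp del: of_nat_add)
qed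

lemma Mf_a: "1 \<le> a \<Longrightarrow> Mf (a-1) b c d = Mf a b c d * (real a / real (a+b+c+d))"
  unfolding Mf_def using Mf_gen[of a "b+c+d" "fact b * fact c * fact d"] by (simp add: ac_simps)

lemma Mf_b: "1 \<le> b \<Longrightarrow> Mf a (b-1) c d = Mf a b c d * (real b / real (a+b+c+d))"
  unfolding Mf_def using Mf_gen[of b "a+c+d" "fact a * fact c * fact d"] by (simp add: ac_simps)

lemma Mf_c: "1 \<le> c \<Longrightarrow> Mf a b (c-1) d = Mf a b c d * (real c / real (a+b+c+d))"
  unfolding Mf_def using Mf_gen[of c "a+b+d" "fact a * fact b * fact d"] by (simp add: ac_simps)

lemma Mf_d: "1 \<le> d \<Longrightarrow> Mf a b c (d-1) = Mf a b c d * (real d / real (a+b+c+d))"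
  unfolding Mf_def using Mf_gen[of d "a+b+c" "fact a * fact b * fact c"] by (simp add: ac_simps)


lemma combine4: "(n::real) \<noteq> 0 \<Longrightarrow> n * R = x*R1 + y*R2 + z*R3 + w*R4 \<Longrightarrow>
   M * R = M*(x/n)*R1 + M*(z/n)*R3 + M*(w/n)*R4 + M*(y/n)*R2"
proof -
  assume n: "n \<noteq> 0" and e: "n * R = x*R1 + y*R2 + z*R3 + w*R4"
  have "R = (x*R1 + y*R2 + z*R3 + w*R4) / n" using n e by (simp add: field_simps)
  then show ?thesis by (simp only: add_divide_distrib distrib_left) simp
qed

lemma combine3: "(n::real) \<noteq> 0 \<Longrightarrow> n * R = x*R1 + y*R2 + H \<Longrightarrow>
   M * R = M*(x/n)*R1 + M*(1/n)*H + M*(y/n)*R2"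
proof -
  assume n: "n \<noteq> 0" and e: "n * R = x*R1 + y*R2 + H"
  have "R = (x*R1 + y*R2 + H) / n" using n e by (simp add: field_simps)
  then show ?thesis by (simp only: add_divide_distrib distrib_left) simp
qed

lemma recA:
  assumes "1 \<le> c" "c < a" "d < b" "\<not> (c = 1 \<and> d = 0)"
  shows "Fm a b c d = Fm (a-1) b c d + Fm a b (c-1) d + (if 0 < d then Fm a b c (d-1) else 0)
           + (if d + 1 < b then Fm a (b-1) c d else 0)"
proof -
  let ?x = "real a" and ?y = "real b" and ?z = "real c" and ?w = "real d"
  let ?M = "Mf a b c d" and ?n = "real (a+b+c+d)"
  have n: "?n \<noteq> 0" using assms by simp
  have 1: "Fm (a-1) b c d = ?M * (?x / ?n) * Rf (?x - 1) ?y ?z ?w"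
    using assms Mf_a[of a b] by (simp add: Fm_Rf of_nat_diff)
  have 2: "Fm a b (c-1) d = ?M * (?z / ?n) * Rf ?x ?y (?z - 1) ?w"
    using assms Mf_c[of c a b d] by (simp add: Fm_Rf of_nat_diff)
  have 3: "(if 0 < d then Fm a b c (d-1) else 0) = ?M * (?w / ?n) * Rf ?x ?y ?z (?w - 1)"
    using assms by (cases "d = 0") (use Mf_d[of d a b c] in \<open>simp_all add: Fm_Rf of_nat_diff\<close>)
  have 4: "(if d + 1 < b then Fm a (b-1) c d else 0) = ?M * (?y / ?n) * Rf ?x (?y - 1) ?z ?w"
  proof (cases "d + 1 < b")
    case True then show ?thesis using assms Mf_b[of b a c d] by (simp add: Fm_Rf of_nat_diff)
  next
    case False
    then have "b = d + 1" using assms by simp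
    then show ?thesis by (simp add: Rf_def)
  qed
  have "(?x + ?y + ?z + ?w) * Rf ?x ?y ?z ?w = ?x * Rf (?x-1) ?y ?z ?w + ?y * Rf ?x (?y-1) ?z ?w
      + ?z * Rf ?x ?y (?z-1) ?w + ?w * Rf ?x ?y ?z (?w-1)"
  proof (rule Rid)
    show "?z + ?w - 1 \<noteq> 0" using assms by (cases d) auto
  qed (use assms in auto)
  then have "?M * Rf ?x ?y ?z ?w = ?M*(?x/?n)*Rf (?x-1) ?y ?z ?w + ?M*(?z/?n)*Rf ?x ?y (?z-1) ?w
      + ?M*(?w/?n)*Rf ?x ?y ?z (?w-1) + ?M*(?y/?n)*Rf ?x (?y-1) ?z ?w"
    by (intro combine4) (use n in auto)
  then show ?thesis unfolding 1 2 3 4 by (simp add: Fm_Rf)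
qed

lemma recB:
  assumes "1 < a" "0 < b"
  shows "Fm a b 1 0 = Fm (a-1) b 1 0 + real ((a - 1 + b) choose b) + (if 1 < b then Fm a (b-1) 1 0 else 0)"
proof -
  let ?x = "real a" and ?y = "real b"
  let ?M = "Mf a b 1 0" and ?n = "real (a+b+1+0)"
  have n: "?n \<noteq> 0" by simp
  have 1: "Fm (a-1) b 1 0 = ?M * (?x / ?n) * Rf (?x - 1) ?y 1 0"
    using assms Mf_a[of a b] by (simp add: Fm_Rf of_nat_diff)
  have 4: "(if 1 < b then Fm a (b-1) 1 0 else 0) = ?M * (?y / ?n) * Rf ?x (?y - 1) 1 0"
  proof (cases "1 < b")
    case True then show ?thesis using assms Mf_b[of b a 1 0] by (simp add: Fm_Rf of_nat_diff)
  next
    case False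
    then have "b = 1" using assms by simp
    then show ?thesis by (simp add: Rf_def)
  qed
  have h: "real ((a - 1 + b) choose b) = ?M * (1 / ?n) * (?x / (?x + ?y))"
  proof -
    have c: "real ((a - 1 + b) choose b) = fact (a - 1 + b) / (fact b * fact (a - 1))"
      by (subst binomial_fact) auto
    have f1: "(fact (a + b + 1) :: real) = real (a+b+1) * (real (a + b) * fact (a - 1 + b))"
    proof -
      have "(fact (a + b + 1) :: real) = real (a+b+1) * fact (a + b)" by simp
      moreover have "(fact (a + b) :: real) = real (a + b) * fact (a + b - 1)"
        using assms by (simp add: fact_red)
      moreover have "a + b - 1 = a - 1 + b" using assms by simp
      ultimately show ?thesis by simp
    qed
    have f2: "(fact a :: real) = real a * fact (a - 1)" using assms by (simp add: fact_red)
    have GL: "\<And>F G B N S A. (G::real) \<noteq> 0 \<Longrightarrow> B \<noteq> 0 \<Longrightarrow> N \<noteq> 0 \<Longrightarrow> S \<noteq> 0 \<Longrightarrow> A \<noteq> 0 \<Longrightarrow>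
       F / (B * G) = (N * (S * F)) / ((A * G) * B) * (1 / N) * (A / S)"
      by (simp add: field_simps)
    have M: "?M = (real (a+b+1) * (real (a + b) * fact (a - 1 + b))) / ((real a * fact (a - 1)) * fact b)"
      unfolding Mf_def f1[symmetric] f2[symmetric] by simp
    have "real ((a - 1 + b) choose b) = (real (a+b+1) * (real (a + b) * fact (a - 1 + b))) / ((real a * fact (a - 1)) * fact b)
       * (1 / real (a+b+1)) * (real a / real (a + b))"
      unfolding c by (rule GL) (use assms in auto)
    then show ?thesis unfolding M by simp
  qed
  have "(?x + ?y + 1) * Rf ?x ?y 1 0 = ?x * Rf (?x-1) ?y 1 0 + ?y * Rf ?x (?y-1) 1 0 + ?x / (?x + ?y)"
    by (rule Hid) (use assms in auto)
  then have "?M * Rf ?x ?y 1 0 = ?M * (?x / (?x + ?y + 1)) * Rf (?x - 1) ?y 1 0 + ?M * (1 / (?x + ?y + 1)) * (?x / (?x + ?y))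
     + ?M * (?y / (?x + ?y + 1)) * Rf ?x (?y - 1) 1 0"
    by (intro combine3) auto
  moreover have "?n = ?x + ?y + 1" by simp
  ultimately have "?M * Rf ?x ?y 1 0 = ?M * (?x / ?n) * Rf (?x - 1) ?y 1 0 + ?M * (1 / ?n) * (?x / (?x + ?y))
     + ?M * (?y / ?n) * Rf ?x (?y - 1) 1 0" by (simp only:)
  then show ?thesis unfolding 1 4 h by (simp add: Fm_Rf)
qed


lemma main_count:
  "1 \<le> c \<Longrightarrow> c < a \<Longrightarrow> d < b \<Longrightarrow> real (num_syt (lam_abcd a b c d)) = Fm a b c d"
proof (induction "a+b+c+d" arbitrary: a b c d rule: less_induct)
  case less
  note st = step_S[OF less.prems]
  have t1: "real (if c + 1 < a then num_syt (lam_abcd (a - 1) b c d) else 0) = Fm (a - 1) b c d"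
  proof (cases "c + 1 < a")
    case True
    then show ?thesis using less.hyps[of "a - 1" b c d] less.prems by simp
  next
    case False
    then have "a - 1 = c" using less.prems by simp
    then show ?thesis using False by (simp add: Fm_def)
  qed
  have t2: "real (if d = 0 \<or> 2 \<le> c then num_syt (lam_abcd a b (c - 1) d) else 0) =
      (if c = 1 \<and> d = 0 then real ((a - 1 + b) choose b) else Fm a b (c - 1) d)"
  proof (cases "2 \<le> c")
    case True
    then show ?thesis using less.hyps[of a b "c - 1" d] less.prems by simp
  next
    case False
    then have c1: "c = 1" using less.prems by simp
    show ?thesis
    proof (cases "d = 0")
      case True
      then show ?thesis using c1 hook_S[of a b] less.prems by simp
    next
      case False
      then show ?thesis using c1 by (simp add: Fm_def)
    qed
  qed
  have t3: "real (if 0 < d then num_syt (lam_abcd a b c (d - 1)) else 0) =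
      (if 0 < d then Fm a b c (d - 1) else 0)"
    using less.hyps[of a b c "d - 1"] less.prems by simp
  have t4: "real (if d + 1 < b then num_syt (lam_abcd a (b - 1) c d) else 0) =
      (if d + 1 < b then Fm a (b - 1) c d else 0)"
    using less.hyps[of a "b - 1" c d] less.prems by simp
  have "real (num_syt (lam_abcd a b c d)) = Fm (a - 1) b c d +
      (if c = 1 \<and> d = 0 then real ((a - 1 + b) choose b) else Fm a b (c - 1) d) +
      (if 0 < d then Fm a b c (d - 1) else 0) + (if d + 1 < b then Fm a (b - 1) c d else 0)"
    unfolding st of_nat_add t1 t2 t3 t4 ..
  also have "\<dots> = Fm a b c d"
  proof (cases "c = 1 \<and> d = 0")
    case True
    then show ?thesis using recB[of a b] less.prems by simp
  next
    case False
    then show ?thesis using recA[of c a d b] less.prems by (subst if_not_P[OF False]) simp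
  qed
  finally show ?case .
qed

lemma ch2: "2 * real (n choose 2) = real n * (real n - 1)"
  by (induction n) (auto simp: numeral_2_eq_2 algebra_simps)

definition gS :: "nat \<Rightarrow> nat \<Rightarrow> nat \<Rightarrow> nat \<Rightarrow> real" where
  "gS a c d i = real (if i = 0 then a else if i = 1 then c + 1 else if i < d + 2 then 2 else 1)"

definition hS :: "nat \<Rightarrow> nat \<Rightarrow> nat \<Rightarrow> nat \<Rightarrow> real" where
  "hS a c d i = gS a c d i * (gS a c d i - 2 * real (i + 1) + 1)"

lemma Q1: "2 \<le> k \<Longrightarrow> k \<le> d + 2 \<Longrightarrow>
   (\<Sum>i<k. hS a c d i) = real a * (real a - 1) + (real c + 1) * (real c - 2) + 2 * real k - 2 * real k * (real k - 1)"
proof (induction k rule: dec_induct)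
  case base
  then show ?case by (simp add: numeral_2_eq_2 hS_def gS_def algebra_simps)
next
  case (step n)
  have "hS a c d n = 2 - 4 * real n" using step by (simp add: hS_def gS_def algebra_simps)
  then show ?case using step by (simp add: algebra_simps)
qed

lemma Q2: "d + 2 \<le> k \<Longrightarrow>
   (\<Sum>i<k. hS a c d i) = (\<Sum>i<d+2. hS a c d i) - (real k * (real k - 1) - (real d + 2) * (real d + 1))"
proof (induction k rule: dec_induct)
  case base
  then show ?case by (simp add: algebra_simps)
next
  case (step n)
  have "hS a c d n = - 2 * real n" using step by (simp add: hS_def gS_def algebra_simps)
  then show ?case using step by (simp add: algebra_simps)
qed

lemma rho_S:
  assumes "d < b"
  shows "rho (lam_abcd a b c d) =
           real (a choose 2) - real ((b + 1) choose 2) + real (c choose 2) - real ((d + 1) choose 2)"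
proof -
  have "rho (lam_abcd a b c d) = (\<Sum>i<b+1. hS a c d i) / 2"
    unfolding rho_def len_S[OF assms] hS_def gS_def
    by (intro arg_cong[where f="\<lambda>x. x / 2"] sum.cong) (simp_all add: nth_S[OF assms])
  also have "(\<Sum>i<b+1. hS a c d i) = real a * (real a - 1) + (real c + 1) * (real c - 2) + 2 * real (d+2)
      - 2 * real (d+2) * (real (d+2) - 1) - (real (b+1) * (real (b+1) - 1) - (real d + 2) * (real d + 1))"
    using Q2[of d "b+1" a c] Q1[of "d+2" d a c] assms by simp
  finally show ?thesis
    using ch2[of a] ch2[of "b+1"] ch2[of c] ch2[of "d+1"] by (simp add: algebra_simps)
qed

theorem mainTheorem14:
  fixes a b c d n :: nat
  assumes "1 \<le> c" "c < a" "d < b" "a + b + c + d = n"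
  shows "real (num_syt (lam_abcd a b c d)) =
           fact n / (fact a * fact b * fact c * fact d) *
           (real a * real c * (real a - real c) * (real b - real d)) /
           ((real a + real b) * (real a + real d) * (real b + real c) * (real c + real d)) \<and>
         rho (lam_abcd a b c d) =
           real (a choose 2) - real ((b + 1) choose 2) + real (c choose 2) - real ((d + 1) choose 2)"
  using main_count[OF assms(1-3)] rho_S[OF assms(3)] assms(4) by (simp add: Fm_def)

end
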